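(* Let $V$ be a vector space over a field $F$ and $T\in OP(V)$. If $T$ has a vanishing polynomial, then there exists a unique monic polynomial $p_m\in F[x]$ of minimal degree among vanishing polynomials of $T$, and $p_m$ divides every vanishing polynomial of $T$.
   Context: $OP(V)$ is the set of all (not necessarily linear) maps $V\to V$, with pointwise addition and scalar multiplication, and composition as product; $T^0=I$ (identity), $T^{i}=T\circ T^{i-1}$. For $p(x)=\sum_{i=0}^m a_ix^i\in F[x]$, $p(T)$ is the map $v\mapsto\sum_{i=0}^m a_iT^i(v)$. A polynomial $p\in F[x]$ is a vanishing polynomial of $T$ if $p\neq0$ and $p(T)(v)=0$ for all $v\in V$. *)

theory Defs
  imports Main "HOL-Computational_Algebra.Polynomial"
begin

definition poly_op :: "('a::field \<Rightarrow> 'v::ab_group_add \<Rightarrow> 'v) \<Rightarrow> 'a poly \<Rightarrow> ('v \<Rightarrow> 'v) \<Rightarrow> 'v \<Rightarrow> 'v" where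
  "poly_op scale p T v = (\<Sum>i\<le>degree p. scale (coeff p i) ((T ^^ i) v))"

definition vanishing_poly :: "('a::field \<Rightarrow> 'v::ab_group_add \<Rightarrow> 'v) \<Rightarrow> ('v \<Rightarrow> 'v) \<Rightarrow> 'a poly \<Rightarrow> bool" where
  "vanishing_poly scale T p \<longleftrightarrow> p \<noteq> 0 \<and> (\<forall>v. poly_op scale p T v = 0)"

end

theory Submission
  imports Defs
begin

lemma op_sum:
  assumes vs: "vector_space scale" and n: "degree p < n"
  shows "poly_op scale p T v = (\<Sum>i<n. scale (coeff p i) ((T ^^ i) v))"
proof -
  interpret vector_space scale by (rule vs)
  have "(\<Sum>i<n. scale (coeff p i) ((T ^^ i) v)) = (\<Sum>i\<in>{..degree p}. scale (coeff p i) ((T ^^ i) v))"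
    apply (rule sum.mono_neutral_right)
    using n by (auto simp: coeff_eq_0)
  then show ?thesis by (simp add: poly_op_def)
qed

lemma op_add:
  assumes vs: "vector_space scale"
  shows "poly_op scale (p + q) T v = poly_op scale p T v + poly_op scale q T v"
proof -
  interpret vector_space scale by (rule vs)
  define n where "n = Suc (max (degree p) (degree q))"
  have "degree (p+q) \<le> max (degree p) (degree q)" by (rule degree_add_le_max)
  hence d: "degree (p+q) < n" by (simp add: n_def)
  have dp: "degree p < n" and dq: "degree q < n" by (auto simp: n_def)
  show ?thesis
    unfolding op_sum[OF vs d] op_sum[OF vs dp] op_sum[OF vs dq]
    by (simp add: scale_left_distrib sum.distrib)
qed

lemma op_smult:
  assumes vs: "vector_space scale"
  shows "poly_op scale (smult c p) T v = scale c (poly_op scale p T v)"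
proof -
  interpret vector_space scale by (rule vs)
  have d: "degree (smult c p) < Suc (degree p)" using degree_smult_le[of c p] by simp
  have dp: "degree p < Suc (degree p)" by simp
  show ?thesis
    unfolding op_sum[OF vs d] op_sum[OF vs dp]
    by (simp add: scale_sum_right scale_right_distrib del: lessThan_Suc)
qed

lemma op_shift:
  assumes vs: "vector_space scale"
  shows "poly_op scale (pCons 0 p) T v = poly_op scale p T (T v)"
proof -
  interpret vector_space scale by (rule vs)
  have d: "degree (pCons 0 p) < Suc (Suc (degree p))"
    by (metis degree_pCons_le le_imp_less_Suc)
  have dp: "degree p < Suc (degree p)" by simp
  show ?thesis
    unfolding op_sum[OF vs d] op_sum[OF vs dp]
    by (simp only: sum.lessThan_Suc_shift coeff_pCons_0 coeff_pCons_Suc scale_zero_left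
       funpow_Suc_right o_apply add_0)
qed

lemma op_mult:
  assumes vs: "vector_space scale" and p: "\<forall>v. poly_op scale p T v = 0"
  shows "poly_op scale (s * p) T v = 0"
  using p
proof (induction s arbitrary: v)
  case 0
  interpret vector_space scale by (rule vs)
  show ?case using op_sum[OF vs, of 0 1] by simp
next
  case (pCons a s)
  interpret vector_space scale by (rule vs)
  show ?case using pCons
    by (simp add: op_add[OF vs] op_smult[OF vs] op_shift[OF vs])
qed

theorem mainTheorem13:
  fixes scale :: "'a::field \<Rightarrow> 'v::ab_group_add \<Rightarrow> 'v" and T :: "'v \<Rightarrow> 'v"
  assumes "vector_space scale"
    and "\<exists>p. vanishing_poly scale T p"
  shows "\<exists>pm. (lead_coeff pm = 1 \<and> vanishing_poly scale T pm
               \<and> (\<forall>q. vanishing_poly scale T q \<longrightarrow> degree pm \<le> degree q))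
          \<and> (\<forall>r. (lead_coeff r = 1 \<and> vanishing_poly scale T r
               \<and> (\<forall>q. vanishing_poly scale T q \<longrightarrow> degree r \<le> degree q)) \<longrightarrow> r = pm)
          \<and> (\<forall>q. vanishing_poly scale T q \<longrightarrow> pm dvd q)"
proof -
  note vs = assms(1)
  interpret vector_space scale by (rule vs)
  have diff: "poly_op scale (p - q) T v = poly_op scale p T v - poly_op scale q T v" for p q v
    using op_add[OF vs, of "p - q" q T v] by (simp add: algebra_simps)
  define d where "d = (LEAST n. \<exists>p. vanishing_poly scale T p \<and> degree p = n)"
  obtain p1 where p1: "vanishing_poly scale T p1" using assms(2) by blast
  have "\<exists>p. vanishing_poly scale T p \<and> degree p = d"
    unfolding d_def by (rule LeastI[of _ "degree p1"]) (use p1 in blast)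
  then obtain p0 where p0: "vanishing_poly scale T p0" "degree p0 = d" by blast
  have mind: "d \<le> degree q" if "vanishing_poly scale T q" for q
    unfolding d_def using that by (metis (mono_tags, lifting) Least_le)
  define pm where "pm = smult (inverse (lead_coeff p0)) p0"
  have p0nz: "p0 \<noteq> 0" using p0 by (simp add: vanishing_poly_def)
  have pmlc: "lead_coeff pm = 1" using p0nz by (simp add: pm_def degree_smult_eq)
  have pmdeg: "degree pm = d" using p0nz by (simp add: pm_def p0(2)[symmetric])
  have pmv: "vanishing_poly scale T pm"
    using p0 p0nz by (auto simp: vanishing_poly_def pm_def op_smult[OF vs])
  have pmnz: "pm \<noteq> 0" using pmv by (simp add: vanishing_poly_def)
  show ?thesis
  proof (intro exI conjI allI impI)
    show "lead_coeff pm = 1" by fact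
    show "vanishing_poly scale T pm" by fact
    show "degree pm \<le> degree q" if "vanishing_poly scale T q" for q
      using mind[OF that] pmdeg by simp
  next
    fix r assume r: "lead_coeff r = 1 \<and> vanishing_poly scale T r
               \<and> (\<forall>q. vanishing_poly scale T q \<longrightarrow> degree r \<le> degree q)"
    have rd: "degree r = d" using r mind pmv pmdeg by (meson le_antisym)
    show "r = pm"
    proof (rule ccontr)
      assume ne: "r \<noteq> pm"
      have "vanishing_poly scale T (r - pm)"
        using ne r pmv by (auto simp: vanishing_poly_def diff)
      hence "d \<le> degree (r - pm)" by (rule mind)
      moreover have "degree (r - pm) < d"
      proof -
        have "degree (r - pm) \<le> d" using degree_diff_le[of r d pm] rd pmdeg by simp
        moreover have "coeff (r - pm) d = 0" using r pmlc rd pmdeg by simp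
        ultimately show ?thesis using ne
          by (metis eq_iff_diff_eq_0 le_neq_implies_less leading_coeff_0_iff)
      qed
      ultimately show False by simp
    qed
  next
    fix q assume q: "vanishing_poly scale T q"
    have "q mod pm = 0"
    proof (rule ccontr)
      assume nz: "q mod pm \<noteq> 0"
      have "q mod pm = q - (q div pm) * pm" by (simp add: mod_div_mult_eq minus_div_mult_eq_mod)
      hence "\<forall>v. poly_op scale (q mod pm) T v = 0"
        using q pmv op_mult[OF vs, of pm T "q div pm"] by (auto simp: vanishing_poly_def diff)
      hence "vanishing_poly scale T (q mod pm)" using nz by (simp add: vanishing_poly_def)
      hence "d \<le> degree (q mod pm)" by (rule mind)
      moreover have "degree (q mod pm) < degree pm" using degree_mod_less'[OF pmnz nz] .
      ultimately show False using pmdeg by simp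
    qed
    thus "pm dvd q" by (simp add: mod_0_imp_dvd)
  qed
qed

end
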